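(* Let $X$ be a real Hilbert space, let $A$ be a closed affine subspace of $X$ and $B$ a nonempty closed convex subset of $X$ (with $A\cap B$ possibly empty). Let $g := P_{\overline{B-A}}\,0$ and assume $g\in B-A$, so that $E:=A\cap(B-g)\neq\varnothing$. Let $T := \mathrm{Id}-P_A+P_BR_A$ and let $x\in X$. Then the sequence $(P_A T^n x)_{n\in\mathbb{N}}$ converges weakly to some point in $E$.
   Context: For a nonempty closed convex set $C\subseteq X$, $P_C$ denotes the metric projection onto $C$ and $R_C:=2P_C-\mathrm{Id}$ the reflector. $T=\tfrac12(\mathrm{Id}+R_BR_A)$ is the Douglas–Rachford operator for the ordered pair $(A,B)$. $\overline{B-A}$ is the closure of the Minkowski difference $B-A=\{b-a: a\in A,\ b\in B\}$, so $g$ is its element of minimal norm. *)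

theory Defs
  imports "HOL-Analysis.Analysis"
begin

definition proj :: "'a::real_inner set \<Rightarrow> 'a \<Rightarrow> 'a" where
  "proj C x = (SOME p. p \<in> C \<and> (\<forall>y\<in>C. dist x p \<le> dist x y))"

definition reflector :: "'a::real_inner set \<Rightarrow> 'a \<Rightarrow> 'a" where
  "reflector C x = 2 *\<^sub>R proj C x - x"

definition mdiff :: "'a::real_vector set \<Rightarrow> 'a set \<Rightarrow> 'a set" where
  "mdiff B A = {b - a | a b. a \<in> A \<and> b \<in> B}"

definition weakly_converges :: "(nat \<Rightarrow> 'a::real_inner) \<Rightarrow> 'a \<Rightarrow> bool" where
  "weakly_converges u p \<longleftrightarrow> (\<forall>y. (\<lambda>n. inner (u n) y) \<longlonglongrightarrow> inner p y)"

end

theory Submission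
  imports Defs "HOL-Library.Diagonal_Subsequence"
begin


lemma parallelogram_mid:
  fixes x u v :: "'a::real_inner"
  shows "(norm (u - v))^2 = 2*(norm (x-u))^2 + 2*(norm (x-v))^2 - 4*(norm (x - (1/2) *\<^sub>R (u+v)))^2"
  by (simp add: power2_norm_eq_inner inner_diff_left inner_diff_right inner_add_left inner_add_right inner_commute algebra_simps)

lemma proj_exists:
  fixes C :: "'a::{real_inner,complete_space} set"
  assumes cl: "closed C" and cv: "convex C" and ne: "C \<noteq> {}"
  shows "\<exists>p\<in>C. \<forall>y\<in>C. dist x p \<le> dist x y"
proof -
  define d where "d = infdist x C"
  have d0: "0 \<le> d" unfolding d_def by (rule infdist_nonneg)
  have bdd: "bdd_below ((\<lambda>a. dist x a) ` C)" by (auto intro!: bdd_belowI[of _ 0])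
  have "\<exists>c\<in>C. dist x c < d + 1 / real (Suc n)" for n
  proof -
    have "(INF a\<in>C. dist x a) < d + 1 / real (Suc n)"
      using ne d0 by (simp add: d_def infdist_notempty)
    then show ?thesis using cINF_less_iff[OF ne bdd] by blast
  qed
  then obtain c where cC: "\<And>n. c n \<in> C" and cd: "\<And>n. dist x (c n) < d + 1 / real (Suc n)"
    by metis
  have dle: "\<And>y. y \<in> C \<Longrightarrow> d \<le> dist x y" unfolding d_def by (rule infdist_le)
  have lim: "(\<lambda>n. dist x (c n)) \<longlonglongrightarrow> d"
  proof (rule tendsto_sandwich[of "\<lambda>n. d" _ _ "\<lambda>n. d + 1 / real (Suc n)"])
    show "\<forall>\<^sub>F n in sequentially. d \<le> dist x (c n)" using dle cC by auto
    show "\<forall>\<^sub>F n in sequentially. dist x (c n) \<le> d + 1 / real (Suc n)" using cd by (intro always_eventually allI less_imp_le)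
    show "(\<lambda>n. d + 1 / real (Suc n)) \<longlonglongrightarrow> d"
      using tendsto_add[OF tendsto_const LIMSEQ_inverse_real_of_nat] by (simp add: inverse_eq_divide)
  qed simp
  have lim2: "(\<lambda>n. (dist x (c n))^2) \<longlonglongrightarrow> d^2" by (intro tendsto_intros lim)
  have "Cauchy c"
  proof (rule metric_CauchyI)
    fix e :: real assume e: "e > 0"
    have "e^2/4 > 0" using e by simp
    from order_tendstoD(2)[OF lim2, of "d^2 + e^2/4"] this
    obtain M where M: "\<And>n. n \<ge> M \<Longrightarrow> (dist x (c n))^2 < d^2 + e^2/4"
      by (auto simp: eventually_sequentially)
    have "dist (c m) (c n) < e" if "m \<ge> M" "n \<ge> M" for m n
    proof -
      have mid: "(1/2) *\<^sub>R (c m + c n) \<in> C"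
        using convexD[OF cv cC[of m] cC[of n], of "1/2" "1/2"] by (simp add: scaleR_add_right)
      have "d \<le> norm (x - (1/2) *\<^sub>R (c m + c n))" using dle[OF mid] by (simp add: dist_norm)
      hence "d^2 \<le> (norm (x - (1/2) *\<^sub>R (c m + c n)))^2" using d0 by (simp add: power_mono)
      moreover have "(norm (x - c m))^2 < d^2 + e^2/4" "(norm (x - c n))^2 < d^2 + e^2/4"
        using M that by (auto simp: dist_norm)
      ultimately have "(norm (c m - c n))^2 < e^2"
        using parallelogram_mid[of "c m" "c n" x] by linarith
      thus ?thesis using e by (simp add: dist_norm power_less_imp_less_base)
    qed
    thus "\<exists>M. \<forall>m\<ge>M. \<forall>n\<ge>M. dist (c m) (c n) < e" by blast
  qed
  then obtain p where cp: "c \<longlonglongrightarrow> p" using Cauchy_convergent_iff convergent_def by blast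
  have pC: "p \<in> C" using closed_sequentially[OF cl] cC cp by blast
  have "(\<lambda>n. dist x (c n)) \<longlonglongrightarrow> dist x p" by (intro tendsto_intros cp)
  hence "dist x p = d" using lim LIMSEQ_unique by blast
  thus ?thesis using pC dle by auto
qed


lemma proj_min:
  fixes C :: "'a::{real_inner,complete_space} set"
  assumes "closed C" "convex C" "C \<noteq> {}"
  shows "proj C x \<in> C" "\<And>y. y \<in> C \<Longrightarrow> dist x (proj C x) \<le> dist x y"
proof -
  have "\<exists>p. p \<in> C \<and> (\<forall>y\<in>C. dist x p \<le> dist x y)" using proj_exists[OF assms] by blast
  hence "proj C x \<in> C \<and> (\<forall>y\<in>C. dist x (proj C x) \<le> dist x y)"
    unfolding proj_def by (rule someI_ex)
  thus "proj C x \<in> C" "\<And>y. y \<in> C \<Longrightarrow> dist x (proj C x) \<le> dist x y" by auto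
qed

lemma proj_vi:
  fixes C :: "'a::{real_inner,complete_space} set"
  assumes "closed C" "convex C" "C \<noteq> {}" "y \<in> C"
  shows "inner (x - proj C x) (y - proj C x) \<le> 0"
proof (rule ccontr)
  define p where "p = proj C x"
  have pC: "p \<in> C" using proj_min[OF assms(1-3)] p_def by simp
  define a where "a = inner (x - p) (y - p)"
  define N where "N = (norm (y - p))^2"
  assume "\<not> inner (x - proj C x) (y - proj C x) \<le> 0"
  hence a0: "a > 0" by (simp add: a_def p_def)
  define t where "t = min 1 (a / (N + 1))"
  have N0: "N \<ge> 0" by (simp add: N_def)
  have t0: "t > 0" using a0 N0 by (simp add: t_def)
  have t1: "t \<le> 1" by (simp add: t_def)
  have "p + t *\<^sub>R (y - p) = (1 - t) *\<^sub>R p + t *\<^sub>R y" by (simp add: algebra_simps)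
  also have "\<dots> \<in> C" using convexD_alt[OF assms(2) pC assms(4), of t] t0 t1 by simp
  finally have mem: "p + t *\<^sub>R (y - p) \<in> C" .
  have "dist x p \<le> dist x (p + t *\<^sub>R (y - p))" using proj_min(2)[OF assms(1-3) mem] p_def by simp
  hence "(norm (x - p))^2 \<le> (norm ((x - p) - t *\<^sub>R (y - p)))^2"
    by (simp add: dist_norm power_mono algebra_simps)
  also have "\<dots> = (norm (x - p))^2 - 2 * t * a + t^2 * N"
    unfolding a_def N_def power2_norm_eq_inner
    by (simp add: inner_diff_left inner_diff_right inner_commute algebra_simps power2_eq_square)
  finally have "2 * t * a \<le> t^2 * N" by simp
  hence "2 * a \<le> t * N" using t0 by (simp add: power2_eq_square)
  moreover have "t * N \<le> a / (N + 1) * N" using N0 unfolding t_def by (intro mult_right_mono) auto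
  moreover have "a / (N + 1) * N < a" using a0 N0 by (simp add: field_simps)
  ultimately show False using a0 by linarith
qed

lemma proj_unique:
  fixes C :: "'a::{real_inner,complete_space} set"
  assumes "closed C" "convex C" "C \<noteq> {}" "p \<in> C" "\<And>y. y \<in> C \<Longrightarrow> inner (x - p) (y - p) \<le> 0"
  shows "proj C x = p"
proof -
  define q where "q = proj C x"
  have qC: "q \<in> C" using proj_min[OF assms(1-3)] q_def by simp
  have 1: "inner (x - q) (p - q) \<le> 0" using proj_vi[OF assms(1-3) assms(4)] q_def by simp
  have 2: "inner (x - p) (q - p) \<le> 0" using assms(5)[OF qC] .
  have "inner (p - q) (p - q) = inner (x - q) (p - q) + inner (x - p) (q - p)"
    by (simp add: inner_diff_left inner_diff_right inner_commute algebra_simps)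
  hence "inner (p - q) (p - q) \<le> 0" using 1 2 by linarith
  hence "inner (p - q) (p - q) = 0" using inner_ge_zero[of "p - q"] by linarith
  hence "p - q = 0" by simp
  thus ?thesis by (simp add: q_def)
qed

lemma proj_affine_orth:
  fixes C :: "'a::{real_inner,complete_space} set"
  assumes "affine C" "closed C" "C \<noteq> {}" "a1 \<in> C" "a2 \<in> C"
  shows "inner (x - proj C x) (a1 - a2) = 0"
proof -
  have cv: "convex C" using assms(1) by (rule affine_imp_convex)
  define p where "p = proj C x"
  have pC: "p \<in> C" using proj_min[OF assms(2) cv assms(3)] p_def by simp
  have h: "inner (x - p) (a - p) = 0" if aC: "a \<in> C" for a
  proof -
    have aff: "\<forall>u v. u + v = 1 \<longrightarrow> u *\<^sub>R a + v *\<^sub>R p \<in> C"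
      using assms(1) aC pC unfolding affine_def by blast
    have "(-1) *\<^sub>R a + 2 *\<^sub>R p \<in> C" using spec[OF spec[OF aff, of "-1"], of 2] by simp
    hence vi1: "inner (x - p) (((-1) *\<^sub>R a + 2 *\<^sub>R p) - p) \<le> 0"
      using proj_vi[OF assms(2) cv assms(3)] p_def by blast
    have eq: "((-1) *\<^sub>R a + 2 *\<^sub>R p) - p = - (a - p)" by (simp add: algebra_simps scaleR_2)
    have "inner (x - p) (- (a - p)) \<le> 0" by (subst eq[symmetric]) (rule vi1)
    hence 1: "- inner (x - p) (a - p) \<le> 0" by (simp only: inner_minus_right)
    have "inner (x - p) (a - p) \<le> 0" using proj_vi[OF assms(2) cv assms(3) aC] p_def by simp
    thus ?thesis using 1 by linarith
  qed
  have "inner (x - p) (a1 - a2) = inner (x - p) (a1 - p) - inner (x - p) (a2 - p)"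
    by (simp add: inner_diff_right)
  thus ?thesis using h[OF assms(4)] h[OF assms(5)] p_def by simp
qed

lemma weak_closed:
  fixes C :: "'a::{real_inner,complete_space} set"
  assumes "closed C" "convex C" "C \<noteq> {}" "\<And>n. u n \<in> C" "weakly_converges u w"
  shows "w \<in> C"
proof -
  define p where "p = proj C w"
  have "\<And>n. inner (u n - p) (w - p) \<le> 0"
    using proj_vi[OF assms(1-3) assms(4)] p_def by (simp add: inner_commute)
  moreover have "(\<lambda>n. inner (u n - p) (w - p)) \<longlonglongrightarrow> inner (w - p) (w - p)"
  proof -
    have "(\<lambda>n. inner (u n) (w - p)) \<longlonglongrightarrow> inner w (w - p)" using assms(5) weakly_converges_def by blast
    hence "(\<lambda>n. inner (u n) (w - p) - inner p (w - p)) \<longlonglongrightarrow> inner w (w - p) - inner p (w - p)"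
      by (rule tendsto_diff) (rule tendsto_const)
    moreover have "(\<lambda>n. inner (u n) (w - p) - inner p (w - p)) = (\<lambda>n. inner (u n - p) (w - p))"
      by (simp add: inner_diff_left)
    moreover have "inner w (w - p) - inner p (w - p) = inner (w - p) (w - p)" by (simp add: inner_diff_left)
    ultimately show ?thesis by simp
  qed
  ultimately have "inner (w - p) (w - p) \<le> 0" by (meson LIMSEQ_le_const2)
  hence "inner (w - p) (w - p) = 0" using inner_ge_zero[of "w - p"] by linarith
  hence "w - p = 0" by simp
  thus ?thesis using proj_min(1)[OF assms(1-3), of w] p_def by simp
qed

lemma weak_shift:
  assumes "weakly_converges u w"
  shows "weakly_converges (\<lambda>n. u n + c) (w + c)"
  unfolding weakly_converges_def
proof
  fix y
  have "(\<lambda>n. inner (u n) y + inner c y) \<longlonglongrightarrow> inner w y + inner c y"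
    using assms unfolding weakly_converges_def by (intro tendsto_add tendsto_const) auto
  thus "(\<lambda>n. inner (u n + c) y) \<longlonglongrightarrow> inner (w + c) y" by (simp add: inner_add_left)
qed

lemma weak_close:
  assumes "weakly_converges u w" "(\<lambda>n. u n - v n) \<longlonglongrightarrow> 0"
  shows "weakly_converges v w"
  unfolding weakly_converges_def
proof
  fix y
  have "(\<lambda>n. inner (u n - v n) y) \<longlonglongrightarrow> inner 0 y" by (rule tendsto_inner[OF assms(2) tendsto_const])
  moreover have "(\<lambda>n. inner (u n) y) \<longlonglongrightarrow> inner w y" using assms(1) weakly_converges_def by blast
  ultimately have "(\<lambda>n. inner (u n) y - inner (u n - v n) y) \<longlonglongrightarrow> inner w y - 0"
    by (intro tendsto_diff) auto
  moreover have "(\<lambda>n. inner (u n) y - inner (u n - v n) y) = (\<lambda>n. inner (v n) y)" by (simp add: inner_diff_left)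
  ultimately show "(\<lambda>n. inner (v n) y) \<longlonglongrightarrow> inner w y" by (simp add: inner_diff_left)
qed

lemma weak_subseq:
  assumes "weakly_converges u w" "strict_mono r"
  shows "weakly_converges (u \<circ> r) w"
  using assms unfolding weakly_converges_def
  using LIMSEQ_subseq_LIMSEQ[where f=r] by (auto simp: o_def)



lemma riesz:
  fixes f :: "'a::{real_inner,complete_space} \<Rightarrow> real"
  assumes add: "\<And>a b. f (a + b) = f a + f b" and sc: "\<And>c a. f (c *\<^sub>R a) = c * f a"
    and bd: "\<And>z. \<bar>f z\<bar> \<le> K * norm z"
  shows "\<exists>e. \<forall>z. f z = inner e z"
proof (cases "\<forall>z. f z = 0")
  case True thus ?thesis by (intro exI[of _ 0]) simp
next
  case False
  then obtain y0 where fy0: "f y0 \<noteq> 0" by blast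
  have bl: "bounded_linear f"
    by (rule bounded_linear_intro[of f K]) (auto simp: add sc bd mult.commute)
  have f0: "f 0 = 0" using sc[of 0 0] by simp
  have fdiff: "f (a - b) = f a - f b" for a b
    using add[of a "(-1) *\<^sub>R b"] sc[of "-1" b] by simp
  define N where "N = {z. f z = 0}"
  have clN: "closed N" unfolding N_def
    by (rule closed_Collect_eq) (auto intro: linear_continuous_on[OF bl])
  have subN: "subspace N" unfolding N_def subspace_def using f0 add sc by auto
  have affN: "affine N" using subN by (rule subspace_imp_affine)
  have cvN: "convex N" using subN by (rule subspace_imp_convex)
  have neN: "N \<noteq> {}" using f0 N_def by auto
  define w where "w = y0 - proj N y0"
  have "proj N y0 \<in> N" using proj_min(1)[OF clN cvN neN] .
  hence fw: "f w = f y0" using fdiff by (simp add: w_def N_def)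
  have orth: "inner w n = 0" if "n \<in> N" for n
    using proj_affine_orth[OF affN clN neN that, of 0 y0] f0 by (simp add: w_def N_def)
  have w0: "inner w w \<noteq> 0" using fw fy0 f0 by auto
  have key: "inner w z = (f z / f w) * inner w w" for z
  proof -
    have "f (z - (f z / f w) *\<^sub>R w) = 0" using fdiff sc fw fy0 by simp
    hence "inner w (z - (f z / f w) *\<^sub>R w) = 0" using orth N_def by auto
    thus ?thesis by (simp add: inner_diff_right)
  qed
  show ?thesis
  proof (intro exI[of _ "(f w / inner w w) *\<^sub>R w"] allI)
    fix z
    show "f z = inner ((f w / inner w w) *\<^sub>R w) z"
      using key[of z] w0 fw fy0 by (simp add: field_simps)
  qed
qed

lemma span_translate_closure:
  fixes S :: "'a::real_normed_vector set"
  assumes "c \<in> span S" "v \<in> closure (span S)"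
  shows "c + v \<in> closure (span S)"
proof -
  have "(+) c ` span S = span S"
  proof
    show "(+) c ` span S \<subseteq> span S" using assms(1) span_add by blast
    show "span S \<subseteq> (+) c ` span S"
    proof
      fix u assume "u \<in> span S"
      hence "u - c \<in> span S" using assms(1) span_diff by blast
      thus "u \<in> (+) c ` span S" by (intro image_eqI[of _ _ "u - c"]) auto
    qed
  qed
  hence "closure (span S) = (+) c ` closure (span S)" using closure_translation[of c "span S"] by simp
  thus ?thesis using assms(2) by blast
qed

lemma weak_compact:
  fixes x :: "nat \<Rightarrow> 'a::{real_inner,complete_space}"
  assumes bd: "\<And>n. norm (x n) \<le> M"
  shows "\<exists>r w. strict_mono r \<and> weakly_converges (x \<circ> r) w"
proof -
  have M0: "0 \<le> M" using bd[of 0] norm_ge_zero[of "x 0"] by linarith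
  have ipb: "\<bar>inner (x n) z\<bar> \<le> M * norm z" for n z
    using Cauchy_Schwarz_ineq2[of "x n" z] bd[of n] by (meson mult_right_mono norm_ge_zero order_trans)
  interpret S: subseqs "\<lambda>m s. convergent (\<lambda>k. inner (x (s k)) (x m))"
  proof
    fix m and s :: "nat \<Rightarrow> nat" assume "strict_mono s"
    have "bounded (range (\<lambda>k. inner (x (s k)) (x m)))"
      unfolding bounded_iff using ipb by (auto simp: real_norm_def)
    then obtain l r' where "strict_mono r'" "((\<lambda>k. inner (x (s k)) (x m)) \<circ> r') \<longlonglongrightarrow> l"
      using bounded_imp_convergent_subsequence by blast
    thus "\<exists>r'. strict_mono r' \<and> convergent (\<lambda>k. inner (x ((s \<circ> r') k)) (x m))"
      by (auto simp: convergent_def o_def)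
  qed
  define r where "r = S.diagseq"
  have smr: "strict_mono r" unfolding r_def by (rule S.subseq_diagseq)
  define y where "y = x \<circ> r"
  have conv_gen: "convergent (\<lambda>k. inner (y k) (x m))" for m
  proof -
    have "convergent (\<lambda>k. inner (x ((S.diagseq \<circ> (+) (Suc m)) k)) (x m))"
    proof (rule S.diagseq_holds)
      fix r' :: "nat \<Rightarrow> nat" and s n
      assume "strict_mono r'" "convergent (\<lambda>k. inner (x (s k)) (x n))"
      thus "convergent (\<lambda>k. inner (x ((s \<circ> r') k)) (x n))"
        using convergent_subseq_convergent[of "\<lambda>k. inner (x (s k)) (x n)" r'] by (simp add: o_def)
    qed
    then obtain L where "(\<lambda>k. inner (x (S.diagseq (Suc m + k))) (x m)) \<longlonglongrightarrow> L"
      by (auto simp: convergent_def o_def)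
    hence "(\<lambda>k. inner (y (k + Suc m)) (x m)) \<longlonglongrightarrow> L" by (simp add: y_def r_def add.commute)
    hence "(\<lambda>k. inner (y k) (x m)) \<longlonglongrightarrow> L" by (rule LIMSEQ_offset)
    thus ?thesis by (auto simp: convergent_def)
  qed
  have ybd: "\<And>k. norm (y k) \<le> M" using bd by (simp add: y_def)
  have conv_span: "convergent (\<lambda>k. inner (y k) z)" if "z \<in> span (range x)" for z
  proof (rule span_induct[OF that])
    show "subspace {z. convergent (\<lambda>k. inner (y k) z)}"
      unfolding subspace_def
    proof (intro conjI ballI allI)
      show "0 \<in> {z. convergent (\<lambda>k. inner (y k) z)}" by (simp add: convergent_const)
    next
      fix a b assume "a \<in> {z. convergent (\<lambda>k. inner (y k) z)}" "b \<in> {z. convergent (\<lambda>k. inner (y k) z)}"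
      thus "a + b \<in> {z. convergent (\<lambda>k. inner (y k) z)}"
        by (simp add: inner_add_right convergent_add)
    next
      fix c :: real and a assume "a \<in> {z. convergent (\<lambda>k. inner (y k) z)}"
      then obtain L where "(\<lambda>k. inner (y k) a) \<longlonglongrightarrow> L" by (auto simp: convergent_def)
      hence "(\<lambda>k. c * inner (y k) a) \<longlonglongrightarrow> c * L" by (rule tendsto_mult_left)
      thus "c *\<^sub>R a \<in> {z. convergent (\<lambda>k. inner (y k) z)}" by (auto simp: convergent_def)
    qed
  next
    fix z assume "z \<in> range x"
    thus "convergent (\<lambda>k. inner (y k) z)" using conv_gen by auto
  qed
  have conv_cl: "convergent (\<lambda>k. inner (y k) z)" if zc: "z \<in> closure (span (range x))" for z
  proof -
    have "Cauchy (\<lambda>k. inner (y k) z)"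
    proof (rule metric_CauchyI)
      fix e :: real assume e: "e > 0"
      define d where "d = e / (3 * (M + 1))"
      have d0: "d > 0" using e M0 by (simp add: d_def)
      obtain z' where z': "z' \<in> span (range x)" "dist z' z < d"
        using zc d0 unfolding closure_approachable by blast
      have "Cauchy (\<lambda>k. inner (y k) z')" using conv_span[OF z'(1)] Cauchy_convergent_iff by blast
      then obtain N where N: "\<And>m n. m \<ge> N \<Longrightarrow> n \<ge> N \<Longrightarrow> dist (inner (y m) z') (inner (y n) z') < e/3"
        using e metric_CauchyD[of "\<lambda>k. inner (y k) z'" "e/3"] by auto
      have Md: "M * d < e / 3" using M0 e unfolding d_def by (simp add: field_simps)
      have close: "\<bar>inner (y k) z - inner (y k) z'\<bar> < e/3" for k
      proof -
        have "\<bar>inner (y k) z - inner (y k) z'\<bar> = \<bar>inner (y k) (z - z')\<bar>" by (simp add: inner_diff_right)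
        also have "\<dots> \<le> M * norm (z - z')" using Cauchy_Schwarz_ineq2[of "y k" "z - z'"] ybd[of k]
          by (meson mult_right_mono norm_ge_zero order_trans)
        also have "\<dots> \<le> M * d" using z'(2) M0 by (simp add: dist_norm norm_minus_commute mult_left_mono)
        finally show ?thesis using Md by linarith
      qed
      have "dist (inner (y m) z) (inner (y n) z) < e" if "m \<ge> N" "n \<ge> N" for m n
        using close[of m] close[of n] N[OF that] by (simp add: dist_real_def abs_if split: if_splits)
      thus "\<exists>N. \<forall>m\<ge>N. \<forall>n\<ge>N. dist (inner (y m) z) (inner (y n) z) < e" by blast
    qed
    thus ?thesis using Cauchy_convergent_iff by blast
  qed
  define K where "K = closure (span (range x))"
  have clK: "closed K" unfolding K_def by simp
  have cvK: "convex K" unfolding K_def by (intro convex_closure subspace_imp_convex subspace_span)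
  have neK: "K \<noteq> {}" unfolding K_def using span_zero closure_subset by blast
  have yspan: "y k \<in> span (range x)" for k by (simp add: y_def span_base)
  have conv: "convergent (\<lambda>k. inner (y k) z)" for z
  proof -
    define P where "P = proj K z"
    have PK: "P \<in> K" using proj_min(1)[OF clK cvK neK] P_def by simp
    have orth: "inner (y k) (z - P) = 0" for k
    proof -
      have "y k + P \<in> K" using span_translate_closure[OF yspan PK[unfolded K_def]] K_def by simp
      hence 1: "inner (z - P) ((y k + P) - P) \<le> 0" using proj_vi[OF clK cvK neK] P_def by blast
      have "- y k \<in> span (range x)" using yspan span_neg by blast
      hence "- y k + P \<in> K" using span_translate_closure[OF _ PK[unfolded K_def]] K_def by blast
      hence 2: "inner (z - P) ((- y k + P) - P) \<le> 0" using proj_vi[OF clK cvK neK] P_def by blast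
      from 1 2 show ?thesis by (simp add: inner_commute)
    qed
    have "(\<lambda>k. inner (y k) z) = (\<lambda>k. inner (y k) P)"
    proof
      fix k
      have "inner (y k) z = inner (y k) P + inner (y k) (z - P)" by (simp add: inner_diff_right)
      thus "inner (y k) z = inner (y k) P" using orth by simp
    qed
    thus ?thesis using conv_cl PK K_def by simp
  qed
  define f where "f z = lim (\<lambda>k. inner (y k) z)" for z
  have lim: "(\<lambda>k. inner (y k) z) \<longlonglongrightarrow> f z" for z
    using conv[of z] unfolding f_def by (simp add: convergent_LIMSEQ_iff)
  have fadd: "f (a + b) = f a + f b" for a b
  proof -
    have "(\<lambda>k. inner (y k) a + inner (y k) b) \<longlonglongrightarrow> f a + f b" by (intro tendsto_add lim)
    hence "(\<lambda>k. inner (y k) (a + b)) \<longlonglongrightarrow> f a + f b" by (simp add: inner_add_right)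
    thus ?thesis using lim[of "a + b"] LIMSEQ_unique by blast
  qed
  have fsc: "f (c *\<^sub>R a) = c * f a" for c a
  proof -
    have "(\<lambda>k. c * inner (y k) a) \<longlonglongrightarrow> c * f a" by (intro tendsto_mult_left lim)
    hence "(\<lambda>k. inner (y k) (c *\<^sub>R a)) \<longlonglongrightarrow> c * f a" by simp
    thus ?thesis using lim[of "c *\<^sub>R a"] LIMSEQ_unique by blast
  qed
  have fbd: "\<bar>f z\<bar> \<le> M * norm z" for z
  proof -
    have "(\<lambda>k. \<bar>inner (y k) z\<bar>) \<longlonglongrightarrow> \<bar>f z\<bar>" by (intro tendsto_rabs lim)
    moreover have "\<And>k. \<bar>inner (y k) z\<bar> \<le> M * norm z" using ipb by (simp add: y_def)
    ultimately show ?thesis by (meson LIMSEQ_le_const2)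
  qed
  obtain e where e: "\<And>z. f z = inner e z" using riesz[OF fadd fsc fbd] by blast
  have "weakly_converges y e" unfolding weakly_converges_def using lim e by simp
  thus ?thesis using smr y_def by blast
qed



lemma alg:
  fixes u s e b g :: "'a::real_inner" and k :: real
  assumes "k \<ge> 0" "inner u (s - e) = 0" "inner ((s - b) - u - k *\<^sub>R g) (e - b) \<le> 0"
    "inner g (b - e) \<ge> 0"
  shows "(norm (u + b - e))^2 + (norm (s - b))^2 \<le> (norm (u + s - e))^2"
proof -
  have k: "k * inner g (b - e) \<ge> 0" using assms by simp
  have h: "inner ((s - b) - u) (e - b) \<le> 0"
    using assms(3) k by (simp add: inner_diff_left inner_diff_right algebra_simps)
  have "(norm (u + s - e))^2 - (norm (u + b - e))^2 - (norm (s - b))^2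
      = - 2 * inner ((s - b) - u) (e - b) + 2 * inner u (s - e)"
    unfolding power2_norm_eq_inner
    by (simp add: inner_diff_left inner_diff_right inner_add_left inner_add_right inner_commute algebra_simps)
  thus ?thesis using h assms(2) by linarith
qed


lemma not_tendsto_subseq:
  fixes X :: "nat \<Rightarrow> real"
  assumes "\<not> X \<longlonglongrightarrow> L"
  shows "\<exists>\<epsilon>>0. \<exists>r::nat\<Rightarrow>nat. strict_mono r \<and> (\<forall>k. \<epsilon> \<le> dist (X (r k)) L)"
proof -
  have "\<exists>\<epsilon>>0. \<forall>N. \<exists>n\<ge>N. \<epsilon> \<le> dist (X n) L"
    using assms unfolding lim_sequentially by (metis not_less)
  then obtain \<epsilon> where e1: "\<epsilon> > 0" and e2: "\<forall>N. \<exists>n\<ge>N. \<epsilon> \<le> dist (X n) L" by (elim exE conjE)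
  define S where "S = {n. \<epsilon> \<le> dist (X n) L}"
  have "infinite S" unfolding S_def infinite_nat_iff_unbounded_le using e2 by simp
  hence sm: "strict_mono (enumerate S)" by (rule strict_mono_enumerate)
  have ins: "\<And>k. enumerate S k \<in> S" by (rule enumerate_in_set) fact
  have "\<forall>k. \<epsilon> \<le> dist (X (enumerate S k)) L" using ins unfolding S_def by simp
  hence "strict_mono (enumerate S) \<and> (\<forall>k. \<epsilon> \<le> dist (X (enumerate S k)) L)" using sm by simp
  hence "\<exists>r::nat\<Rightarrow>nat. strict_mono r \<and> (\<forall>k. \<epsilon> \<le> dist (X (r k)) L)" by (rule exI[where x="enumerate S"])
  thus ?thesis using e1 by (intro exI[of _ \<epsilon>]) simp
qed

theorem theorem2p3:
  fixes A B :: "'a::{real_inner, complete_space} set" and x :: 'a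
  assumes "affine A" and "closed A" and "A \<noteq> {}"
    and "convex B" and "closed B" and "B \<noteq> {}"
    and "proj (closure (mdiff B A)) 0 \<in> mdiff B A"
  shows "\<exists>e \<in> A \<inter> (\<lambda>b. b - proj (closure (mdiff B A)) 0) ` B.
           weakly_converges
             (\<lambda>n. proj A (((\<lambda>y. y - proj A y + proj B (reflector A y)) ^^ n) x)) e"
proof -
  note affA = assms(1) and clA = assms(2) and neA = assms(3)
    and cvB = assms(4) and clB = assms(5) and neB = assms(6)
  have cvA: "convex A" using affA by (rule affine_imp_convex)
  define D where "D = closure (mdiff B A)"
  define g where "g = proj D 0"
  have md: "mdiff B A = (\<Union>b\<in>B. \<Union>a\<in>A. {b - a})" unfolding mdiff_def by auto
  have clD: "closed D" unfolding D_def by simp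
  have cvD: "convex D" unfolding D_def md by (intro convex_closure convex_differences cvA cvB)
  have neD: "D \<noteq> {}" unfolding D_def md using neA neB closure_subset by fastforce
  have G: "inner g (b - a) \<ge> inner g g" if "b \<in> B" "a \<in> A" for a b
  proof -
    have "b - a \<in> D" unfolding D_def md using that closure_subset by fastforce
    hence "inner (0 - g) ((b - a) - g) \<le> 0" using proj_vi[OF clD cvD neD] g_def by blast
    thus ?thesis by (simp add: inner_diff_right)
  qed
  obtain b0 where b0: "b0 \<in> B" using neB by blast
  have G2: "inner g (a1 - a2) = 0" if "a1 \<in> A" "a2 \<in> A" for a1 a2
  proof (rule ccontr)
    define c where "c = inner g (a1 - a2)"
    assume "inner g (a1 - a2) \<noteq> 0"
    hence c0: "c \<noteq> 0" by (simp add: c_def)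
    define t where "t = (inner g (b0 - a2) - inner g g + 1) / c"
    have "(1 - t) *\<^sub>R a2 + t *\<^sub>R a1 \<in> A" using affA that unfolding affine_def by simp
    hence "inner g (b0 - ((1 - t) *\<^sub>R a2 + t *\<^sub>R a1)) \<ge> inner g g" using G b0 by blast
    moreover have "inner g (b0 - ((1 - t) *\<^sub>R a2 + t *\<^sub>R a1)) = inner g (b0 - a2) - t * c"
      by (simp add: c_def inner_diff_right inner_add_right algebra_simps)
    moreover have "t * c = inner g (b0 - a2) - inner g g + 1" using c0 by (simp add: t_def)
    ultimately show False by linarith
  qed
  have PA: "proj A (y + t *\<^sub>R g) = proj A y" for y t
  proof (rule proj_unique[OF clA cvA neA])
    show "proj A y \<in> A" using proj_min(1)[OF clA cvA neA] .
    fix a assume aA: "a \<in> A"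
    have "inner (y + t *\<^sub>R g - proj A y) (a - proj A y)
        = inner (y - proj A y) (a - proj A y) + t * inner g (a - proj A y)"
      by (simp add: inner_diff_left inner_add_left algebra_simps)
    also have "\<dots> = 0"
      using proj_affine_orth[OF affA clA neA aA proj_min(1)[OF clA cvA neA]] G2[OF aA proj_min(1)[OF clA cvA neA]]
      by simp
    finally show "inner (y + t *\<^sub>R g - proj A y) (a - proj A y) \<le> 0" by simp
  qed
  define T where "T = (\<lambda>y. y - proj A y + proj B (reflector A y))"
  define Tn where "Tn n = (T ^^ n) x" for n
  define z where "z n = Tn n - real n *\<^sub>R g" for n
  define s where "s n = proj A (z n)" for n
  define bb where "bb n = proj B (reflector A (Tn n)) - g" for n
  have Tnz: "Tn n = z n + real n *\<^sub>R g" for n by (simp add: z_def)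
  have s_eq: "proj A (Tn n) = s n" for n by (simp add: Tnz s_def PA)
  have sA: "s n \<in> A" for n unfolding s_def by (rule proj_min(1)[OF clA cvA neA])
  have bbB: "bb n + g \<in> B" for n unfolding bb_def using proj_min(1)[OF clB cvB neB] by simp
  have step: "z (Suc n) = z n - s n + bb n" for n
  proof -
    have "Tn (Suc n) = T (Tn n)" by (simp add: Tn_def)
    also have "\<dots> = Tn n - s n + (bb n + g)" by (simp add: T_def s_eq bb_def)
    finally have "Tn (Suc n) = Tn n - s n + (bb n + g)" .
    thus ?thesis unfolding z_def by (simp add: algebra_simps)
  qed
  define E where "E = A \<inter> (\<lambda>b. b - g) ` B"
  have key: "(norm (z (Suc n) - e))^2 + (norm (s n - bb n))^2 \<le> (norm (z n - e))^2" if eE: "e \<in> E" for e n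
  proof -
    have eA: "e \<in> A" and egB: "e + g \<in> B" using eE unfolding E_def by auto
    define u where "u = z n - s n"
    have o1: "inner u (s n - e) = 0" unfolding u_def s_def
      using proj_affine_orth[OF affA clA neA sA[of n, unfolded s_def] eA] .
    define q where "q = reflector A (Tn n)"
    have q: "q = 2 *\<^sub>R s n - z n - real n *\<^sub>R g" unfolding q_def reflector_def s_eq by (simp add: Tnz)
    have p: "proj B q = bb n + g" by (simp add: bb_def q_def)
    have vi: "inner (q - proj B q) ((e + g) - proj B q) \<le> 0" by (rule proj_vi[OF clB cvB neB egB])
    have eq1: "q - proj B q = (s n - bb n) - u - real (Suc n) *\<^sub>R g"
      unfolding p by (simp add: q u_def algebra_simps scaleR_2)
    have eq2: "(e + g) - proj B q = e - bb n" by (simp add: p)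
    have vi2: "inner ((s n - bb n) - u - real (Suc n) *\<^sub>R g) (e - bb n) \<le> 0" using vi eq1 eq2 by simp
    have "inner g ((bb n + g) - e) \<ge> inner g g" using G[OF bbB eA] .
    hence g3: "inner g (bb n - e) \<ge> 0" by (simp add: inner_diff_right inner_add_right)
    have "(norm (u + bb n - e))^2 + (norm (s n - bb n))^2 \<le> (norm (u + s n - e))^2"
      by (rule alg[OF _ o1 vi2 g3]) simp
    moreover have "z (Suc n) - e = u + bb n - e" by (simp add: step u_def)
    moreover have "z n - e = u + s n - e" by (simp add: u_def)
    ultimately show ?thesis by simp
  qed
  define d where "d e n = (norm (z n - e))^2" for e n
  have dec: "decseq (d e)" if "e \<in> E" for e
    using key[OF that] by (intro decseq_SucI) (smt (verit) d_def zero_le_power2)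
  obtain e0 where e0: "e0 \<in> E"
  proof -
    obtain a b where "a \<in> A" "b \<in> B" "g = b - a" using assms(7) unfolding mdiff_def g_def D_def by blast
    hence "a \<in> E" unfolding E_def by force
    thus ?thesis using that by blast
  qed
  have dconv: "\<exists>L. d e \<longlonglongrightarrow> L" if eE: "e \<in> E" for e
  proof -
    obtain L where "d e \<longlonglongrightarrow> L" using decseq_convergent[OF dec[OF eE], of 0] by (auto simp: d_def)
    thus ?thesis by blast
  qed
  have diff0: "(\<lambda>n. s n - bb n) \<longlonglongrightarrow> 0"
  proof -
    obtain L where L: "d e0 \<longlonglongrightarrow> L" using dconv[OF e0] by blast
    have "(\<lambda>n. d e0 n - d e0 (Suc n)) \<longlonglongrightarrow> L - L"
      by (intro tendsto_diff L) (rule LIMSEQ_Suc[OF L])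
    hence up: "(\<lambda>n. d e0 n - d e0 (Suc n)) \<longlonglongrightarrow> 0" by simp
    have "(\<lambda>n. (norm (s n - bb n))^2) \<longlonglongrightarrow> 0"
    proof (rule tendsto_sandwich[of "\<lambda>n. 0" _ _ "\<lambda>n. d e0 n - d e0 (Suc n)"])
      show "\<forall>\<^sub>F n in sequentially. 0 \<le> (norm (s n - bb n))^2" by simp
      show "\<forall>\<^sub>F n in sequentially. (norm (s n - bb n))^2 \<le> d e0 n - d e0 (Suc n)"
        using key[OF e0] unfolding d_def by (intro always_eventually allI) (smt (verit))
      show "(\<lambda>n. 0) \<longlonglongrightarrow> (0::real)" by simp
      show "(\<lambda>n. d e0 n - d e0 (Suc n)) \<longlonglongrightarrow> 0" by (rule up)
    qed
    hence "(\<lambda>n. sqrt ((norm (s n - bb n))^2)) \<longlonglongrightarrow> sqrt 0" by (rule tendsto_real_sqrt)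
    hence "(\<lambda>n. norm (s n - bb n)) \<longlonglongrightarrow> 0" by simp
    thus ?thesis by (simp add: tendsto_norm_zero_iff)
  qed
  have orthz: "inner (z n - s n) (a1 - a2) = 0" if "a1 \<in> A" "a2 \<in> A" for n a1 a2
    unfolding s_def by (rule proj_affine_orth[OF affA clA neA that])
  have sbd: "norm (s n) \<le> norm e0 + norm (z 0 - e0)" for n
  proof -
    have eA: "e0 \<in> A" using e0 E_def by auto
    have "(norm (z n - e0))^2 = (norm (z n - s n))^2 + (norm (s n - e0))^2"
    proof -
      have "z n - e0 = (z n - s n) + (s n - e0)" by simp
      hence "(norm (z n - e0))^2 = (norm (z n - s n))^2 + 2 * inner (z n - s n) (s n - e0) + (norm (s n - e0))^2"
        by (metis power2_norm_eq_inner inner_add_left inner_add_right inner_commute add.assoc mult_2)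
      thus ?thesis using orthz[OF sA eA] by simp
    qed
    moreover have "d e0 n \<le> d e0 0" using dec[OF e0] by (simp add: decseq_def)
    ultimately have "(norm (s n - e0))^2 \<le> (norm (z 0 - e0))^2"
      unfolding d_def using zero_le_power2[of "norm (z n - s n)"] by linarith
    hence "norm (s n - e0) \<le> norm (z 0 - e0)" by (rule power2_le_imp_le[OF _ norm_ge_zero])
    moreover have "norm (s n) \<le> norm e0 + norm (s n - e0)" using norm_triangle_ineq[of e0 "s n - e0"] by simp
    ultimately show ?thesis by linarith
  qed
  have iconv: "\<exists>L. (\<lambda>n. inner (s n) (e2 - e1)) \<longlonglongrightarrow> L" if ee: "e1 \<in> E" "e2 \<in> E" for e1 e2
  proof -
    obtain L1 where L1: "d e1 \<longlonglongrightarrow> L1" using dconv ee by blast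
    obtain L2 where L2: "d e2 \<longlonglongrightarrow> L2" using dconv ee by blast
    have eqn: "inner (s n) (e2 - e1) = (d e1 n - d e2 n - inner e1 e1 + inner e2 e2) / 2" for n
    proof -
      have "inner (s n) (e2 - e1) = inner (z n) (e2 - e1)"
        using orthz[of e2 e1 n] ee unfolding E_def by (auto simp: inner_diff_left)
      thus ?thesis unfolding d_def power2_norm_eq_inner
        by (simp add: inner_diff_left inner_diff_right inner_commute algebra_simps)
    qed
    moreover have "(\<lambda>n. (d e1 n - d e2 n - inner e1 e1 + inner e2 e2) / 2) \<longlonglongrightarrow> (L1 - L2 - inner e1 e1 + inner e2 e2) / 2"
      by (intro tendsto_intros L1 L2) simp
    moreover have "(\<lambda>n. inner (s n) (e2 - e1)) = (\<lambda>n. (d e1 n - d e2 n - inner e1 e1 + inner e2 e2) / 2)"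
      using eqn by (rule ext)
    ultimately show ?thesis by auto
  qed
  have clu: "w \<in> E" if r: "strict_mono r" and w: "weakly_converges (s \<circ> r) w" for r w
  proof -
    have "\<And>n. (s \<circ> r) n \<in> A" using sA by simp
    hence wA: "w \<in> A" using weak_closed[OF clA cvA neA _ w] by blast
    have "(\<lambda>n. (s \<circ> r) n - (bb \<circ> r) n) \<longlonglongrightarrow> 0"
      using LIMSEQ_subseq_LIMSEQ[OF diff0 r] by (simp add: o_def)
    hence "weakly_converges (bb \<circ> r) w" by (rule weak_close[OF w])
    hence "weakly_converges (\<lambda>n. (bb \<circ> r) n + g) (w + g)" by (rule weak_shift)
    moreover have "\<And>n. (bb \<circ> r) n + g \<in> B" using bbB by simp
    ultimately have "w + g \<in> B" using weak_closed[OF clB cvB neB, of "\<lambda>n. (bb \<circ> r) n + g" "w + g"] by blast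
    hence "w \<in> (\<lambda>b. b - g) ` B" by (intro image_eqI[of _ _ "w + g"]) auto
    thus ?thesis using wA E_def by auto
  qed
  have uniq: "w1 = w2" if hh: "strict_mono r1" "weakly_converges (s \<circ> r1) w1" "w1 \<in> E"
    "strict_mono r2" "weakly_converges (s \<circ> r2) w2" "w2 \<in> E" for r1 r2 w1 w2
  proof -
    obtain L where L: "(\<lambda>n. inner (s n) (w2 - w1)) \<longlonglongrightarrow> L" using iconv[OF hh(3) hh(6)] by blast
    have "((\<lambda>n. inner (s n) (w2 - w1)) \<circ> r1) \<longlonglongrightarrow> L" by (rule LIMSEQ_subseq_LIMSEQ[OF L hh(1)])
    moreover have "((\<lambda>n. inner (s n) (w2 - w1)) \<circ> r1) \<longlonglongrightarrow> inner w1 (w2 - w1)"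
      using hh(2) unfolding weakly_converges_def by (simp add: o_def)
    ultimately have 1: "L = inner w1 (w2 - w1)" using LIMSEQ_unique by blast
    have "((\<lambda>n. inner (s n) (w2 - w1)) \<circ> r2) \<longlonglongrightarrow> L" by (rule LIMSEQ_subseq_LIMSEQ[OF L hh(4)])
    moreover have "((\<lambda>n. inner (s n) (w2 - w1)) \<circ> r2) \<longlonglongrightarrow> inner w2 (w2 - w1)"
      using hh(5) unfolding weakly_converges_def by (simp add: o_def)
    ultimately have 2: "L = inner w2 (w2 - w1)" using LIMSEQ_unique by blast
    have "inner (w2 - w1) (w2 - w1) = 0" using 1 2 by (simp add: inner_diff_left)
    thus ?thesis by simp
  qed
  obtain r w where r: "strict_mono r" and w: "weakly_converges (s \<circ> r) w"
    using weak_compact[of s, OF sbd] by blast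
  have wE: "w \<in> E" by (rule clu[OF r w])
  have "weakly_converges s w"
    unfolding weakly_converges_def
  proof (rule allI, rule ccontr)
    fix y assume "\<not> (\<lambda>n. inner (s n) y) \<longlonglongrightarrow> inner w y"
    then obtain \<epsilon> and r2 :: "nat \<Rightarrow> nat" where eps: "\<epsilon> > 0" "strict_mono r2" "\<And>k. \<epsilon> \<le> dist (inner (s (r2 k)) y) (inner w y)"
      using not_tendsto_subseq by blast
    obtain r3 :: "nat \<Rightarrow> nat" and w2 where r3: "strict_mono r3" and w2: "weakly_converges ((s \<circ> r2) \<circ> r3) w2"
      using weak_compact[of "s \<circ> r2" "norm e0 + norm (z 0 - e0)"] sbd by auto
    have r23: "strict_mono (r2 \<circ> r3)" using eps(2) r3 by (rule strict_mono_o)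
    have w2': "weakly_converges (s \<circ> (r2 \<circ> r3)) w2" using w2 by (simp add: o_assoc)
    have w2E: "w2 \<in> E" by (rule clu[OF r23 w2'])
    have "w2 = w" by (rule uniq[OF r23 w2' w2E r w wE])
    have "(\<lambda>k. dist (inner (s (r2 (r3 k))) y) (inner w y)) \<longlonglongrightarrow> dist (inner w2 y) (inner w y)"
      using w2' unfolding weakly_converges_def by (intro tendsto_dist tendsto_const) (auto simp: o_def)
    hence "\<epsilon> \<le> dist (inner w2 y) (inner w y)" using eps(3) by (meson LIMSEQ_le_const)
    thus False using \<open>w2 = w\<close> eps(1) by simp
  qed
  moreover have "(\<lambda>n. proj A (((\<lambda>y. y - proj A y + proj B (reflector A y)) ^^ n) x)) = s"
    using s_eq by (auto simp: Tn_def T_def)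
  ultimately show ?thesis using wE unfolding E_def g_def D_def by auto
qed


end
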